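(* Let $\sigma:\mathbb{Z}\to\mathbb{Z}$ be an admissible injective function. Then for every $k\in\mathbb{Z}$ there exist record indices $r_-$ and $r_+$ of $\sigma$ with $r_-<k<r_+$.
   Context: $\sigma:\mathbb{Z}\to\mathbb{Z}$ is admissible if $|\{i\in\mathbb{N}:\sigma(i)\notin\mathbb{N}\}|+|\{i\in\mathbb{Z}\setminus\mathbb{N}:\sigma(i)\in\mathbb{N}\}|<\infty$, where $\mathbb{N}=\{1,2,\dots\}$. A record index of $\sigma$ is an $r\in\mathbb{Z}$ such that $\sigma(r)>\sigma(k)$ for all $k<r$. *)

theory Defs
  imports Main
begin

definition posInts :: "int set" where
  "posInts = {i. i \<ge> 1}"

definition admissible :: "(int \<Rightarrow> int) \<Rightarrow> bool" where
  "admissible \<sigma> \<longleftrightarrow>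
     finite {i \<in> posInts. \<sigma> i \<notin> posInts} \<and>
     finite {i \<in> UNIV - posInts. \<sigma> i \<in> posInts}"

definition record_index :: "(int \<Rightarrow> int) \<Rightarrow> int \<Rightarrow> bool" where
  "record_index \<sigma> r \<longleftrightarrow> (\<forall>k<r. \<sigma> r > \<sigma> k)"

end

theory Submission
  imports Defs
begin

lemma bdd_left:
  fixes \<sigma> :: "int \<Rightarrow> int"
  assumes "admissible \<sigma>"
  shows "\<exists>B. \<forall>j\<le>k. \<sigma> j \<le> B"
proof -
  define S where "S = {i \<in> UNIV - posInts. \<sigma> i \<in> posInts}"
  have fS: "finite S" using assms unfolding admissible_def S_def by blast
  define F where "F = S \<union> {1..k}"
  have fF: "finite F" using fS unfolding F_def by simp
  define B where "B = Max (insert 0 (\<sigma> ` F))"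
  have "\<sigma> j \<le> B" if "j \<le> k" for j
  proof (cases "j \<in> F")
    case True
    then show ?thesis unfolding B_def using fF by (intro Max_ge) auto
  next
    case False
    then have "\<sigma> j \<le> 0" using that unfolding F_def S_def posInts_def by auto
    also have "0 \<le> B" unfolding B_def using fF by (intro Max_ge) auto
    finally show ?thesis .
  qed
  then show ?thesis by blast
qed

lemma max_left:
  fixes \<sigma> :: "int \<Rightarrow> int"
  assumes "admissible \<sigma>"
  shows "\<exists>r\<le>k. \<forall>j\<le>k. \<sigma> j \<le> \<sigma> r"
proof -
  obtain B where B: "\<forall>j\<le>k. \<sigma> j \<le> B" using bdd_left[OF assms] by blast
  define W where "W = {v \<in> \<sigma> ` {..k}. v \<ge> \<sigma> k}"
  have fW: "finite W" by (rule finite_subset[of _ "{\<sigma> k..B}"]) (auto simp: W_def B)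
  have ne: "W \<noteq> {}" unfolding W_def by auto
  have "Max W \<in> W" using Max_in[OF fW ne] .
  then obtain r where r: "r \<le> k" "\<sigma> r = Max W" unfolding W_def by auto
  have "\<sigma> j \<le> \<sigma> r" if "j \<le> k" for j
  proof (cases "\<sigma> j \<ge> \<sigma> k")
    case True
    then have "\<sigma> j \<in> W" using that unfolding W_def by auto
    then show ?thesis using r fW by simp
  next
    case False
    moreover have "\<sigma> k \<in> W" unfolding W_def by auto
    moreover have "\<sigma> k \<le> Max W" using Max_ge[OF fW] \<open>\<sigma> k \<in> W\<close> by blast
    ultimately show ?thesis using r by simp
  qed
  then show ?thesis using r by blast
qed

lemma unbdd_right:
  fixes \<sigma> :: "int \<Rightarrow> int"
  assumes "admissible \<sigma>" "inj \<sigma>"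
  shows "\<exists>r>k. \<sigma> r > M"
proof (rule ccontr)
  assume H: "\<not> ?thesis"
  define T where "T = {i \<in> posInts. \<sigma> i \<notin> posInts}"
  have fT: "finite T" using assms unfolding admissible_def T_def by blast
  define P where "P = {max k 0 <..} - T"
  have "infinite {max k 0 <..}" by (simp add: infinite_Ioi)
  then have iP: "infinite P" using fT unfolding P_def by auto
  have "\<sigma> ` P \<subseteq> {1..M}" using H unfolding P_def T_def posInts_def by fastforce
  then have "finite (\<sigma> ` P)" using finite_subset by blast
  moreover have "inj_on \<sigma> P" using assms(2) by (simp add: inj_on_def inj_def)
  ultimately show False using iP finite_imageD by blast
qed

theorem lemma2p3:
  fixes \<sigma> :: "int \<Rightarrow> int"
  assumes "admissible \<sigma>" and "inj \<sigma>"
  shows "\<forall>k. \<exists>rm rp. record_index \<sigma> rm \<and> record_index \<sigma> rp \<and> rm < k \<and> k < rp"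
proof
  fix k
  obtain rm where rm: "rm \<le> k - 1" "\<forall>j\<le>k - 1. \<sigma> j \<le> \<sigma> rm"
    using max_left[OF assms(1), of "k - 1"] by blast
  have recm: "record_index \<sigma> rm" unfolding record_index_def
  proof (intro allI impI)
    fix j assume "j < rm"
    then have "\<sigma> j \<le> \<sigma> rm" "\<sigma> j \<noteq> \<sigma> rm" using rm assms(2) by (auto dest: injD)
    then show "\<sigma> j < \<sigma> rm" by simp
  qed
  obtain r0 where r0: "r0 \<le> k" "\<forall>j\<le>k. \<sigma> j \<le> \<sigma> r0"
    using max_left[OF assms(1), of k] by blast
  define M where "M = \<sigma> r0"
  obtain r where r: "r > k" "\<sigma> r > M" using unbdd_right[OF assms, of k M] by blast
  define Q where "Q = (\<lambda>n::nat. \<sigma> (k + 1 + int n) > M)"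
  have "Q (nat (r - k - 1))" unfolding Q_def using r by simp
  then have "\<exists>n. Q n" by blast
  define n where "n = (LEAST n. Q n)"
  have Qn: "Q n" unfolding n_def by (rule LeastI_ex) fact
  have nQ: "\<not> Q m" if "m < n" for m using that not_less_Least n_def by blast
  define rp where "rp = k + 1 + int n"
  have recp: "record_index \<sigma> rp" unfolding record_index_def
  proof (intro allI impI)
    fix j assume j: "j < rp"
    have "\<sigma> j \<le> M"
    proof (cases "j \<le> k")
      case True then show ?thesis using r0 M_def by simp
    next
      case False
      then have "nat (j - k - 1) < n" "j = k + 1 + int (nat (j - k - 1))" using j rp_def by auto
      then show ?thesis using nQ[of "nat (j - k - 1)"] unfolding Q_def by auto
    qed
    then show "\<sigma> j < \<sigma> rp" using Qn unfolding Q_def rp_def by simp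
  qed
  show "\<exists>rm rp. record_index \<sigma> rm \<and> record_index \<sigma> rp \<and> rm < k \<and> k < rp"
    using recm recp rm rp_def by (intro exI[of _ rm] exI[of _ rp]) auto
qed

end
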